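(* Let $n\ge 1$, let $x_0,\dots,x_n\in C[0,1]$ be real-valued with $x_k(\xi)\neq x_{k-1}(\xi)$ for all $\xi\in[0,1]$ and $k=1,\dots,n$. Let $F:Q[0,1]\to\mathbb{R}$ be $(n-1)$-times Gâteaux differentiable. Let $a_0\in\mathbb{R}$ and let $a_1,\dots,a_n\in C[0,1]$. Suppose that for every $\xi\in[0,1]$ and every $i\in\{0,1,\dots,n\}$ the continued fraction $Q_n(x^i(\cdot,\xi),\xi)$ is well defined and the interpolation conditions $$Q_n(x^i(\cdot,\xi),\xi)=F(x^i(\cdot,\xi)),\qquad i=0,1,\dots,n,\ \ \xi\in[0,1],$$ hold. Then: (i) $a_0=F(x_0)$; (ii) the function $\xi\mapsto F(x^1(\cdot,\xi))$ is differentiable on $[0,1]$ (one-sidedly at the endpoints) and $$a_1(\xi)=\frac{-1}{x_1(\xi)-x_0(\xi)}\,\frac{d}{d\xi}F(x^1(\cdot,\xi)),\qquad \xi\in[0,1];$$ (iii) for each $k\in\{2,\dots,n\}$ and each relatively open subset $J\subseteq[0,1]$ on which $G_k(\xi)$ is well defined, $G_k$ is differentiable on $J$ and $$a_k(\xi)=\frac{-1}{x_k(\xi)-x_{k-1}(\xi)}\,\frac{d}{d\xi}G_k(\xi),\qquad \xi\in J .$$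
   Context: Continued fraction notation: for quantities $b_0,c_1,b_1,\dots,c_m,b_m$, the finite continued fraction $b_0+\frac{c_1}{b_1}+\frac{c_2}{b_2}+\dots+\frac{c_m}{b_m}$ means $b_0+\cfrac{c_1}{b_1+\cfrac{c_2}{b_2+\dots+\cfrac{c_m}{b_m}}}$; it is called well defined if, when it is evaluated from the innermost level outward, every denominator encountered is nonzero. $Q[0,1]$ denotes the space of real-valued piecewise continuous functions on $[0,1]$. $H$ is the Heaviside function, $H(t)=1$ for $t\ge 0$, $H(t)=0$ for $t<0$. Given $x_0,\dots,x_n\in C[0,1]$, the continual nodes are $x^0(z,\xi):=x_0(z)$ and $x^i(z,\xi):=x_0(z)+H(z-\xi)\,(x_i(z)-x_0(z))$ for $i=1,\dots,n$, $z,\xi\in[0,1]$; for fixed $\xi$, $x^i(\cdot,\xi)\in Q[0,1]$. Integral continued C-fraction: given a number $a_0$ and kernels $a_1,\dots,a_n:[0,1]\to\mathbb{R}$, for $x\in Q[0,1]$ and $\xi\in[0,1]$ put $A_j(x,\xi):=\int_0^1 a_j(z)\,[x(z)-x^{j-1}(z,\xi)]\,dz$ ($j=1,\dots,n$) and $$Q_n(x(\cdot),\xi):=a_0+\frac{A_1(x,\xi)}{1}+\frac{A_2(x,\xi)}{1}+\dots+\frac{A_n(x,\xi)}{1}.$$ For $k\in\{2,\dots,n\}$, $j\in\{1,\dots,k-1\}$ and $\xi\in[0,1]$ put $A^{(k)}_j(\xi):=\int_0^1 a_j(z)\,[x^k(z,\xi)-x^{j-1}(z,\xi)]\,dz$ and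 $$G_k(\xi):=\cfrac{A^{(k)}_{k-1}(\xi)}{-1+\cfrac{A^{(k)}_{k-2}(\xi)}{-1+\dots+\cfrac{A^{(k)}_{2}(\xi)}{-1+\cfrac{A^{(k)}_{1}(\xi)}{F(x^k(\cdot,\xi))-F(x_0)}}}},$$ so that $G_2(\xi)=A^{(2)}_1(\xi)/\big(F(x^2(\cdot,\xi))-F(x_0)\big)$ and $G_3(\xi)=A^{(3)}_2(\xi)/\big(-1+A^{(3)}_1(\xi)/(F(x^3(\cdot,\xi))-F(x_0))\big)$. *)

theory Defs
  imports "HOL-Analysis.Analysis"
begin

definition heaviside :: "real \<Rightarrow> real" where
  "heaviside t = (if t \<ge> 0 then 1 else 0)"

definition Q01 :: "(real \<Rightarrow> real) set" where
  "Q01 = {f. \<exists>S. finite S \<and> continuous_on ({0..1} - S) f \<and>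
      (\<forall>s\<in>S \<inter> {0..1}.
          (0 < s \<longrightarrow> (\<exists>L. (f \<longlongrightarrow> L) (at_left s))) \<and>
          (s < 1 \<longrightarrow> (\<exists>L. (f \<longlongrightarrow> L) (at_right s))))}"

definition gderiv :: "((real \<Rightarrow> real) \<Rightarrow> real) \<Rightarrow> (real \<Rightarrow> real) \<Rightarrow> (real \<Rightarrow> real) \<Rightarrow> real" where
  "gderiv F h x = deriv (\<lambda>t. F (\<lambda>z. x z + t * h z)) 0"

fun gateaux_n :: "nat \<Rightarrow> ((real \<Rightarrow> real) \<Rightarrow> real) \<Rightarrow> bool" where
  "gateaux_n 0 F = True"
| "gateaux_n (Suc m) F =
     ((\<forall>x\<in>Q01. \<forall>h\<in>Q01. (\<lambda>t. F (\<lambda>z. x z + t * h z)) differentiable (at 0)) \<and>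
      (\<forall>h\<in>Q01. gateaux_n m (\<lambda>x. gderiv F h x)))"

text \<open>Finite continued fraction b0 + c1/b1 + ... + cm/bm, with the list
  [(c1,b1),...,(cm,bm)]. cf_tail gives c1/(b1 + c2/(b2 + ...)).\<close>
fun cf_tail :: "(real \<times> real) list \<Rightarrow> real" where
  "cf_tail [] = 0"
| "cf_tail ((c, b) # rest) = c / (b + cf_tail rest)"

definition cfrac :: "real \<Rightarrow> (real \<times> real) list \<Rightarrow> real" where
  "cfrac b0 ps = b0 + cf_tail ps"

fun cf_wd :: "(real \<times> real) list \<Rightarrow> bool" where
  "cf_wd [] = True"
| "cf_wd ((c, b) # rest) = (cf_wd rest \<and> b + cf_tail rest \<noteq> 0)"

definition cnode :: "(nat \<Rightarrow> real \<Rightarrow> real) \<Rightarrow> nat \<Rightarrow> real \<Rightarrow> real \<Rightarrow> real" where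
  "cnode xs i \<xi> = (\<lambda>z. if i = 0 then xs 0 z
                        else xs 0 z + heaviside (z - \<xi>) * (xs i z - xs 0 z))"

definition Acoef :: "(nat \<Rightarrow> real \<Rightarrow> real) \<Rightarrow> (nat \<Rightarrow> real \<Rightarrow> real) \<Rightarrow> nat \<Rightarrow>
    (real \<Rightarrow> real) \<Rightarrow> real \<Rightarrow> real" where
  "Acoef a xs j x \<xi> = integral {0..1} (\<lambda>z. a j z * (x z - cnode xs (j - 1) \<xi> z))"

definition Qlist :: "(nat \<Rightarrow> real \<Rightarrow> real) \<Rightarrow> (nat \<Rightarrow> real \<Rightarrow> real) \<Rightarrow> nat \<Rightarrow>
    (real \<Rightarrow> real) \<Rightarrow> real \<Rightarrow> (real \<times> real) list" where
  "Qlist a xs n x \<xi> = map (\<lambda>j. (Acoef a xs j x \<xi>, 1)) [1..<Suc n]"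

definition Qn :: "real \<Rightarrow> (nat \<Rightarrow> real \<Rightarrow> real) \<Rightarrow> (nat \<Rightarrow> real \<Rightarrow> real) \<Rightarrow> nat \<Rightarrow>
    (real \<Rightarrow> real) \<Rightarrow> real \<Rightarrow> real" where
  "Qn a0 a xs n x \<xi> = cfrac a0 (Qlist a xs n x \<xi>)"

text \<open>G_k(xi) = A_{k-1}/(-1 + A_{k-2}/(-1 + ... + A_1/(F(x^k) - F(x_0)))),
  where A_j = A_j^{(k)}(xi) = A_j(x^k(.,xi), xi).\<close>
definition Glist :: "((real \<Rightarrow> real) \<Rightarrow> real) \<Rightarrow> (nat \<Rightarrow> real \<Rightarrow> real) \<Rightarrow>
    (nat \<Rightarrow> real \<Rightarrow> real) \<Rightarrow> nat \<Rightarrow> real \<Rightarrow> (real \<times> real) list" where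
  "Glist F a xs k \<xi> =
     map (\<lambda>j. (Acoef a xs j (cnode xs k \<xi>) \<xi>,
               if j = 1 then F (cnode xs k \<xi>) - F (xs 0) else -1))
         (rev [1..<k])"

definition Gk :: "((real \<Rightarrow> real) \<Rightarrow> real) \<Rightarrow> (nat \<Rightarrow> real \<Rightarrow> real) \<Rightarrow>
    (nat \<Rightarrow> real \<Rightarrow> real) \<Rightarrow> nat \<Rightarrow> real \<Rightarrow> real" where
  "Gk F a xs k \<xi> = cf_tail (Glist F a xs k \<xi>)"

definition Gk_wd :: "((real \<Rightarrow> real) \<Rightarrow> real) \<Rightarrow> (nat \<Rightarrow> real \<Rightarrow> real) \<Rightarrow>
    (nat \<Rightarrow> real \<Rightarrow> real) \<Rightarrow> nat \<Rightarrow> real \<Rightarrow> bool" where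
  "Gk_wd F a xs k \<xi> = cf_wd (Glist F a xs k \<xi>)"

end

theory Submission
  imports Defs "HOL-Analysis.Analysis"
begin


lemma cf_tail_append: "cf_tail ys = 0 \<Longrightarrow> cf_tail (xs @ ys) = cf_tail xs"
proof (induction xs)
  case Nil then show ?case by simp
next
  case (Cons p xs) then show ?case by (cases p) simp
qed

lemma tail_zero:
  fixes c :: "nat \<Rightarrow> real"
  assumes "c (Suc k) = 0"
  shows "cf_tail (map (\<lambda>j. (c j, 1)) [Suc k..<Suc n]) = 0"
proof (cases "Suc k < Suc n")
  case True
  then have "[Suc k..<Suc n] = Suc k # [Suc (Suc k)..<Suc n]" by (simp add: upt_conv_Cons)
  then show ?thesis using assms by simp
next
  case False then show ?thesis by simp
qed

lemma Q_eval:
  assumes "k \<le> n"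
  shows "cf_tail (Qlist a xs n (cnode xs k \<xi>) \<xi>)
       = cf_tail (map (\<lambda>j. (Acoef a xs j (cnode xs k \<xi>) \<xi>, 1)) [1..<Suc k])"
proof -
  have e: "[1..<Suc n] = [1..<Suc k] @ [Suc k..<Suc n]"
    using upt_add_eq_append[of 1 "Suc k" "n-k"] assms by simp
  have z: "Acoef a xs (Suc k) (cnode xs k \<xi>) \<xi> = 0" by (simp add: Acoef_def)
  show ?thesis
    unfolding Qlist_def e map_append
    by (rule cf_tail_append, rule tail_zero[where c="\<lambda>j. Acoef a xs j (cnode xs k \<xi>) \<xi>"], rule z)
qed

lemma div_div_back: "(c::real) / d \<noteq> 0 \<Longrightarrow> c / (c / d) = d"
  by (simp)

lemma G_eval:
  fixes c :: "nat \<Rightarrow> real" and k :: nat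
  defines "T \<equiv> \<lambda>j. cf_tail (map (\<lambda>j. (c j, 1::real)) [j..<Suc k])"
  assumes "1 \<le> m" "m < k"
    and "cf_wd (map (\<lambda>j. (c j, if j = 1 then T 1 else -1)) (rev [1..<Suc m]))"
  shows "cf_tail (map (\<lambda>j. (c j, if j = 1 then T 1 else -1)) (rev [1..<Suc m])) = 1 + T (Suc m)"
  using assms(2-4)
proof (induction m)
  case 0 then show ?case by simp
next
  case (Suc m)
  have Trec: "\<And>j. j \<le> k \<Longrightarrow> T j = c j / (1 + T (Suc j))"
    by (case_tac "j = k") (auto simp: T_def upt_conv_Cons)
  have r: "rev [1..<Suc (Suc m)] = Suc m # rev [1..<Suc m]" by simp
  show ?case
  proof (cases "m = 0")
    case True
    then have T1: "T 1 \<noteq> 0" using Suc.prems by simp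
    have e: "T 1 = c 1 / (1 + T (Suc 1))" using Trec[of 1] Suc.prems by simp
    have "c 1 / T 1 = 1 + T (Suc 1)" using e T1 div_div_back by metis
    then show ?thesis using True T1 by simp
  next
    case False
    have wd: "cf_wd (map (\<lambda>j. (c j, if j = 1 then T 1 else -1)) (rev [1..<Suc m]))"
      and den: "-1 + cf_tail (map (\<lambda>j. (c j, if j = 1 then T 1 else -1)) (rev [1..<Suc m])) \<noteq> 0"
      using Suc.prems False unfolding r by auto
    have ih: "cf_tail (map (\<lambda>j. (c j, if j = 1 then T 1 else -1)) (rev [1..<Suc m])) = 1 + T (Suc m)"
      using Suc.IH[OF _ _ wd] False Suc.prems by simp
    have T0: "T (Suc m) \<noteq> 0" using den ih by simp
    have "T (Suc m) = c (Suc m) / (1 + T (Suc (Suc m)))" using Trec Suc.prems by simp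
    then have "c (Suc m) / T (Suc m) = 1 + T (Suc (Suc m))" using T0 div_div_back by metis
    then show ?thesis unfolding r using ih False by (simp del: upt_Suc)
  qed
qed

lemma A_int:
  assumes "1 \<le> k" "0 \<le> \<xi>" "\<xi> \<le> 1"
  shows "Acoef a xs k (cnode xs k \<xi>) \<xi> = integral {\<xi>..1} (\<lambda>z. a k z * (xs k z - xs (k-1) z))"
proof -
  let ?g = "\<lambda>z. a k z * (xs k z - xs (k-1) z)"
  have "Acoef a xs k (cnode xs k \<xi>) \<xi> = integral {0..1} (\<lambda>z. if z \<in> {\<xi>..1} then ?g z else 0)"
    unfolding Acoef_def
    by (rule integral_cong) (use assms in \<open>auto simp: cnode_def heaviside_def algebra_simps\<close>)
  also have "\<dots> = integral ({\<xi>..1} \<inter> {0..1}) ?g" by (rule integral_restrict_Int)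
  also have "{\<xi>..1} \<inter> {0..1} = {\<xi>..(1::real)}" using assms by auto
  finally show ?thesis .
qed

lemma A_deriv:
  assumes "continuous_on {0..1} (\<lambda>z. a k z * (xs k z - xs (k-1) z))" "\<xi> \<in> {0..1}"
  shows "((\<lambda>s. integral {s..1} (\<lambda>z. a k z * (xs k z - xs (k-1) z))) has_real_derivative
           - (a k \<xi> * (xs k \<xi> - xs (k-1) \<xi>))) (at \<xi> within {0..1})"
  using integral_has_vector_derivative'[OF assms]
  by (simp add: has_real_derivative_iff_has_vector_derivative)

theorem theorem1:
  fixes n :: nat
    and xs :: "nat \<Rightarrow> real \<Rightarrow> real"
    and F :: "(real \<Rightarrow> real) \<Rightarrow> real"
    and a0 :: real
    and a :: "nat \<Rightarrow> real \<Rightarrow> real"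
  assumes n1: "n \<ge> 1"
    and xs_cont: "\<forall>i\<le>n. continuous_on {0..1} (xs i)"
    and xs_dist: "\<forall>\<xi>\<in>{0..1}. \<forall>k\<in>{1..n}. xs k \<xi> \<noteq> xs (k - 1) \<xi>"
    and F_gat: "gateaux_n (n - 1) F"
    and a_cont: "\<forall>j\<in>{1..n}. continuous_on {0..1} (a j)"
    and wd: "\<forall>\<xi>\<in>{0..1}. \<forall>i\<le>n. cf_wd (Qlist a xs n (cnode xs i \<xi>) \<xi>)"
    and interp: "\<forall>\<xi>\<in>{0..1}. \<forall>i\<le>n. Qn a0 a xs n (cnode xs i \<xi>) \<xi> = F (cnode xs i \<xi>)"
  shows "a0 = F (xs 0)
     \<and> (\<forall>\<xi>\<in>{0..1}. \<exists>D. ((\<lambda>s. F (cnode xs 1 s)) has_real_derivative D) (at \<xi> within {0..1})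
            \<and> a 1 \<xi> = (-1 / (xs 1 \<xi> - xs 0 \<xi>)) * D)
     \<and> (\<forall>k\<in>{2..n}. \<forall>J. J \<subseteq> {0..1} \<and> openin (top_of_set {0..1}) J
            \<and> (\<forall>\<xi>\<in>J. Gk_wd F a xs k \<xi>) \<longrightarrow>
            (\<forall>\<xi>\<in>J. \<exists>D. (Gk F a xs k has_real_derivative D) (at \<xi> within J)
                 \<and> a k \<xi> = (-1 / (xs k \<xi> - xs (k - 1) \<xi>)) * D))"
proof -
  have i0: "a0 = F (xs 0)"
  proof -
    have "Qn a0 a xs n (cnode xs 0 0) 0 = F (cnode xs 0 0)" using interp by simp
    moreover have "cnode xs 0 0 = xs 0" by (simp add: cnode_def)
    moreover have "Qn a0 a xs n (cnode xs 0 0) 0 = a0"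
      unfolding Qn_def cfrac_def using Q_eval[of 0 n a xs 0] by simp
    ultimately show ?thesis by simp
  qed
  define g where "g k = (\<lambda>z. a k z * (xs k z - xs (k-1) z))" for k
  have gc: "continuous_on {0..1} (g k)" if "k \<in> {1..n}" for k
    unfolding g_def using that a_cont xs_cont
    by (intro continuous_intros) auto
  have gd: "((\<lambda>s. integral {s..1} (g k)) has_real_derivative - g k \<xi>) (at \<xi> within {0..1})"
    if "k \<in> {1..n}" "\<xi> \<in> {0..1}" for k \<xi>
    using A_deriv[of a k xs \<xi>, OF gc[OF that(1), unfolded g_def] that(2)] unfolding g_def .
  have aeq: "a k \<xi> = (-1 / (xs k \<xi> - xs (k - 1) \<xi>)) * (- g k \<xi>)"
    if "k \<in> {1..n}" "\<xi> \<in> {0..1}" for k \<xi>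
    using xs_dist that by (auto simp: g_def field_simps)
  define c where "c k \<xi> j = Acoef a xs j (cnode xs k \<xi>) \<xi>" for k \<xi> j
  define T where "T k \<xi> j = cf_tail (map (\<lambda>j. (c k \<xi> j, 1::real)) [j..<Suc k])" for k \<xi> j
  have FT: "F (cnode xs k \<xi>) - F (xs 0) = T k \<xi> 1" if "k \<le> n" "\<xi> \<in> {0..1}" for k \<xi>
  proof -
    have "Qn a0 a xs n (cnode xs k \<xi>) \<xi> = F (cnode xs k \<xi>)" using interp that by auto
    then show ?thesis using Q_eval[OF that(1), of a xs \<xi>] i0
      unfolding Qn_def cfrac_def T_def c_def by simp
  qed
  have ck: "c k \<xi> k = integral {\<xi>..1} (g k)" if "1 \<le> k" "\<xi> \<in> {0..1}" for k \<xi>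
    unfolding c_def g_def using A_int[OF that(1), of \<xi> a xs] that by simp
  have Tk: "T k \<xi> k = c k \<xi> k" for k \<xi>
    by (simp add: T_def)
  have i1: "\<forall>\<xi>\<in>{0..1}. \<exists>D. ((\<lambda>s. F (cnode xs 1 s)) has_real_derivative D) (at \<xi> within {0..1})
            \<and> a 1 \<xi> = (-1 / (xs 1 \<xi> - xs 0 \<xi>)) * D"
  proof
    fix \<xi> :: real assume \<xi>: "\<xi> \<in> {0..1}"
    have "1 \<in> {1..n}" using n1 by simp
    have eq: "F (xs 0) + integral {s..1} (g 1) = F (cnode xs 1 s)" if "s \<in> {0..1}" for s
      using FT[of 1 s] Tk[of 1 s] ck[of 1 s] n1 that by simp
    have "((\<lambda>s. F (xs 0) + integral {s..1} (g 1)) has_real_derivative - g 1 \<xi>) (at \<xi> within {0..1})"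
      using gd[OF \<open>1 \<in> {1..n}\<close> \<xi>] by (auto intro!: derivative_eq_intros)
    then have "((\<lambda>s. F (cnode xs 1 s)) has_real_derivative - g 1 \<xi>) (at \<xi> within {0..1})"
      by (rule has_field_derivative_transform_within[where d=1]) (use \<xi> eq in auto)
    then show "\<exists>D. ((\<lambda>s. F (cnode xs 1 s)) has_real_derivative D) (at \<xi> within {0..1})
            \<and> a 1 \<xi> = (-1 / (xs 1 \<xi> - xs 0 \<xi>)) * D"
      using aeq[OF \<open>1 \<in> {1..n}\<close> \<xi>] by auto
  qed
  have i2: "\<forall>k\<in>{2..n}. \<forall>J. J \<subseteq> {0..1} \<and> openin (top_of_set {0..1}) J
            \<and> (\<forall>\<xi>\<in>J. Gk_wd F a xs k \<xi>) \<longrightarrow>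
            (\<forall>\<xi>\<in>J. \<exists>D. (Gk F a xs k has_real_derivative D) (at \<xi> within J)
                 \<and> a k \<xi> = (-1 / (xs k \<xi> - xs (k - 1) \<xi>)) * D)"
  proof (intro ballI allI impI)
    fix k J \<xi> assume k: "k \<in> {2..n}"
      and J: "J \<subseteq> {0..1} \<and> openin (top_of_set {0..1}) J \<and> (\<forall>\<xi>\<in>J. Gk_wd F a xs k \<xi>)"
      and \<xi>: "\<xi> \<in> J"
    have k1: "k \<in> {1..n}" using k by auto
    have Geq: "Gk F a xs k s = 1 + integral {s..1} (g k)" if s: "s \<in> J" for s
    proof -
      have s01: "s \<in> {0..1}" using J s by auto
      have rk: "rev [1..<k] = rev [1..<Suc (k-1)]" using k by simp
      have gl: "Glist F a xs k s = map (\<lambda>j. (c k s j, if j = 1 then T k s 1 else -1)) (rev [1..<Suc (k-1)])"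
        unfolding Glist_def rk using FT[of k s] k s01 by (simp add: c_def)
      have wdG: "cf_wd (map (\<lambda>j. (c k s j, if j = 1 then T k s 1 else -1)) (rev [1..<Suc (k-1)]))"
        using J s gl unfolding Gk_wd_def by metis
      have "Gk F a xs k s = 1 + T k s (Suc (k-1))"
        unfolding Gk_def gl T_def
        apply (rule G_eval[where c="c k s" and k=k and m="k-1"])
        using k apply auto[1]
        using k apply auto[1]
        by (rule wdG[unfolded T_def])
      also have "Suc (k-1) = k" using k by simp
      finally show ?thesis using Tk ck[of k s] k s01 by simp
    qed
    have \<xi>01: "\<xi> \<in> {0..1}" using J \<xi> by auto
    have "((\<lambda>s. 1 + integral {s..1} (g k)) has_real_derivative - g k \<xi>) (at \<xi> within {0..1})"
      using gd[OF k1 \<xi>01] by (auto intro!: derivative_eq_intros)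
    then have "((\<lambda>s. 1 + integral {s..1} (g k)) has_real_derivative - g k \<xi>) (at \<xi> within J)"
      using J by (auto intro: DERIV_subset)
    then have "(Gk F a xs k has_real_derivative - g k \<xi>) (at \<xi> within J)"
      by (rule has_field_derivative_transform_within[where d=1]) (use \<xi> Geq in auto)
    then show "\<exists>D. (Gk F a xs k has_real_derivative D) (at \<xi> within J)
                 \<and> a k \<xi> = (-1 / (xs k \<xi> - xs (k - 1) \<xi>)) * D"
      using aeq[OF k1 \<xi>01] by auto
  qed
  show ?thesis using i0 i1 i2 by blast
qed

end
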